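(* Let $A$ and $I$ be finite sets. In the group $\langle\mathcal P(I)\rangle^{\otimes A}$ one has $$\sum_{J\in\mathcal P(I)}(-1)^{|I|-|J|}\bigotimes_{a\in A}\langle J\rangle=\sum_{k\in\mathcal R(A,I)}\ \bigotimes_{a\in A}\ \sum_{J\in\mathcal P(k(a))}(-1)^{|k(a)|-|J|}\langle J\rangle.$$
   Context: $\mathcal P(I)$ is the set of all subsets of $I$; $\langle\mathcal P(I)\rangle$ is the free abelian group with basis $\{\langle J\rangle: J\in\mathcal P(I)\}$, and $\langle\mathcal P(I)\rangle^{\otimes A}$ is the tensor product over $\mathbb Z$ of copies of it indexed by $A$. $\mathcal R(A,I)$ is the set of functions $k\colon A\to\mathcal P(I)$ with $\bigcup_{a\in A}k(a)=I$. *)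

theory Defs
  imports Main "HOL-Library.FuncSet"
begin

text \<open>Elements of the free abelian group with basis P(I) are represented by their
  coefficient functions 'i set => int (finitely supported; for finite I the support
  is automatically inside Pow I).\<close>

definition gen :: "'i set \<Rightarrow> ('i set \<Rightarrow> int)" where
  "gen J = (\<lambda>K. if K = J then 1 else 0)"

text \<open>The tensor power over Z indexed by A of a free abelian group with basis B is the
  free abelian group with basis the functions A -> B; we represent its elements by
  coefficient functions on extensional functions ('a => 'i set) => int.  The pure tensor
  of a family x (a in A) is the multilinear extension of the basis identification.\<close>

definition ptensor :: "'a set \<Rightarrow> ('a \<Rightarrow> ('i set \<Rightarrow> int)) \<Rightarrow> (('a \<Rightarrow> 'i set) \<Rightarrow> int)" where
  "ptensor A x = (\<lambda>f. if f \<in> extensional A then (\<Prod>a\<in>A. x a (f a)) else 0)"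

definition Rset :: "'a set \<Rightarrow> 'i set \<Rightarrow> ('a \<Rightarrow> 'i set) set" where
  "Rset A I = {k \<in> A \<rightarrow>\<^sub>E Pow I. (\<Union>a\<in>A. k a) = I}"

end

theory Submission
  imports Defs
begin

lemma alt_sum:
  assumes "finite I" "U \<subseteq> I"
  shows "(\<Sum>J | J \<subseteq> I \<and> U \<subseteq> J. (-1::int) ^ (card I + card J)) = (if U = I then 1 else 0)"
proof (cases "U = I")
  case True
  then have "{J. J \<subseteq> I \<and> U \<subseteq> J} = {I}" by auto
  then show ?thesis using True by (simp flip: power_add)
next
  case False
  then have "U \<subset> I" using assms by auto
  have "(\<Sum>J | J \<subseteq> I \<and> U \<subseteq> J. (-1::int) ^ (card I + card J))
      = (-1) ^ card I * (\<Sum>J | J \<subseteq> I \<and> U \<subseteq> J. (-1::int) ^ card J)"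
    by (simp add: sum_distrib_left power_add)
  also have "(\<Sum>J | J \<subseteq> I \<and> U \<subseteq> J. (-1::int) ^ card J) = 0"
  proof (rule sum_alternating_cancels)
    show "finite {J. J \<subseteq> I \<and> U \<subseteq> J}" using assms by auto
    have "card {T. T \<subseteq> I \<and> U \<subseteq> T \<and> even(card T)} 
       = card {T. T \<subseteq> I \<and> U \<subseteq> T \<and> odd(card T)}"
      by (rule card_subsupersets_even_odd) (use assms \<open>U \<subset> I\<close> in auto)
    then show "card {x \<in> {J. J \<subseteq> I \<and> U \<subseteq> J}. even (card x)} = card {x \<in> {J. J \<subseteq> I \<and> U \<subseteq> J}. odd (card x)}"
      by (simp add: conj_assoc)
  qed
  finally show ?thesis using False by simp
qed

lemma alt_sum_diff1:
  assumes "finite I" "U \<subseteq> I"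
  shows "(\<Sum>J | J \<subseteq> I \<and> U \<subseteq> J. (-1::int) ^ (card I - card J)) = (if U = I then 1 else 0)"
proof -
  have "(\<Sum>J | J \<subseteq> I \<and> U \<subseteq> J. (-1::int) ^ (card I - card J))
      = (\<Sum>J | J \<subseteq> I \<and> U \<subseteq> J. (-1::int) ^ (card I + card J))"
    by (rule sum.cong) (use assms in \<open>auto simp: card_mono neg_one_power_add_eq_neg_one_power_diff\<close>)
  then show ?thesis using alt_sum[OF assms] by simp
qed

lemma alt_sum_diff2:
  assumes "finite I" "U \<subseteq> I"
  shows "(\<Sum>J | J \<subseteq> I \<and> U \<subseteq> J. (-1::int) ^ (card J - card U)) = (if U = I then 1 else 0)"
proof -
  have "(\<Sum>J | J \<subseteq> I \<and> U \<subseteq> J. (-1::int) ^ (card J - card U))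
      = (-1) ^ (card I + card U) * (\<Sum>J | J \<subseteq> I \<and> U \<subseteq> J. (-1::int) ^ (card I + card J))"
    unfolding sum_distrib_left
  proof (rule sum.cong)
    fix J assume J: "J \<in> {J. J \<subseteq> I \<and> U \<subseteq> J}"
    then have "finite J" using assms finite_subset by auto
    have "(-1::int) ^ (card I + card U) * (-1) ^ (card I + card J) = (-1) ^ (card J + card U) * ((-1) ^ card I * (-1) ^ card I)"
      by (simp add: power_add algebra_simps)
    also have "\<dots> = (-1) ^ (card J + card U)" by (simp flip: power_add)
    also have "\<dots> = (-1) ^ (card J - card U)"
      using J \<open>finite J\<close> by (auto simp: card_mono neg_one_power_add_eq_neg_one_power_diff)
    finally show "(-1::int) ^ (card J - card U) = (-1) ^ (card I + card U) * (-1) ^ (card I + card J)" by simp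
  qed simp
  then show ?thesis using alt_sum[OF assms] by (simp flip: power_add)
qed

definition cc :: "'i set \<Rightarrow> 'i set \<Rightarrow> int" where
  "cc S K = (if K \<subseteq> S then (-1) ^ (card S - card K) else 0)"

lemma E_eq:
  assumes "finite S"
  shows "(\<Sum>J\<in>Pow S. (-1) ^ (card S - card J) * gen J K) = cc S K"
proof -
  have "(\<Sum>J\<in>Pow S. (-1) ^ (card S - card J) * gen J K)
     = (\<Sum>J\<in>Pow S. if J = K then (-1) ^ (card S - card J) else 0)"
    by (rule sum.cong) (auto simp: gen_def)
  also have "\<dots> = cc S K" using assms by (simp add: cc_def)
  finally show ?thesis .
qed

lemma gen_eq:
  assumes "finite J"
  shows "gen J K = (\<Sum>S\<in>Pow J. cc S K)"
proof (cases "K \<subseteq> J")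
  case True
  have "(\<Sum>S\<in>Pow J. cc S K) = (\<Sum>S | S \<subseteq> J \<and> K \<subseteq> S. (-1) ^ (card S - card K))"
    unfolding cc_def using assms by (simp add: sum.If_cases Pow_def Int_def conj_commute)
  also have "\<dots> = (if K = J then 1 else 0)" by (rule alt_sum_diff2[OF assms True])
  finally show ?thesis by (auto simp: gen_def)
next
  case False
  then have "(\<Sum>S\<in>Pow J. cc S K) = 0"
    by (intro sum.neutral) (auto simp: cc_def)
  then show ?thesis using False by (auto simp: gen_def)
qed

theorem lemma15p1:
  fixes A :: "'a set" and I :: "'i set"
  assumes "finite A" and "finite I"
  shows "(\<lambda>f. \<Sum>J\<in>Pow I. (-1) ^ (card I - card J) * ptensor A (\<lambda>a. gen J) f)
       = (\<lambda>f. \<Sum>k\<in>Rset A I.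
            ptensor A (\<lambda>a. (\<lambda>K. \<Sum>J\<in>Pow (k a). (-1) ^ (card (k a) - card J) * gen J K)) f)"
proof
  fix f :: "'a \<Rightarrow> 'i set"
  show "(\<Sum>J\<in>Pow I. (-1) ^ (card I - card J) * ptensor A (\<lambda>a. gen J) f)
       = (\<Sum>k\<in>Rset A I.
            ptensor A (\<lambda>a. (\<lambda>K. \<Sum>J\<in>Pow (k a). (-1) ^ (card (k a) - card J) * gen J K)) f)"
  proof (cases "f \<in> extensional A")
    case False
    then show ?thesis by (simp add: ptensor_def)
  next
    case True
    define T where "T k = (\<Prod>a\<in>A. cc (k a) (f a))" for k
    have finI: "finite S" if "S \<in> Pow I" for S using that assms finite_subset by auto
    have "(\<Sum>k\<in>Rset A I.
            ptensor A (\<lambda>a. (\<lambda>K. \<Sum>J\<in>Pow (k a). (-1) ^ (card (k a) - card J) * gen J K)) f)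
        = (\<Sum>k\<in>Rset A I. T k)"
    proof (rule sum.cong)
      fix k assume "k \<in> Rset A I"
      then have "\<And>a. a \<in> A \<Longrightarrow> finite (k a)" using finI by (auto simp: Rset_def)
      then show "ptensor A (\<lambda>a. (\<lambda>K. \<Sum>J\<in>Pow (k a). (-1) ^ (card (k a) - card J) * gen J K)) f = T k"
        using True by (simp add: ptensor_def T_def E_eq)
    qed simp
    also have "\<dots> = (\<Sum>k\<in>A \<rightarrow>\<^sub>E Pow I. T k * (if (\<Union>a\<in>A. k a) = I then 1 else 0))"
    proof -
      have "Rset A I = {k \<in> A \<rightarrow>\<^sub>E Pow I. (\<Union>a\<in>A. k a) = I}" by (simp add: Rset_def)
      then show ?thesis
        using assms by (simp add: sum.inter_filter finite_PiE if_distrib cong: if_cong)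
    qed
    also have "\<dots> = (\<Sum>k\<in>A \<rightarrow>\<^sub>E Pow I. T k * (\<Sum>J | J \<subseteq> I \<and> (\<Union>a\<in>A. k a) \<subseteq> J. (-1::int) ^ (card I - card J)))"
    proof (rule sum.cong)
      fix k assume "k \<in> A \<rightarrow>\<^sub>E Pow I"
      then have "(\<Union>a\<in>A. k a) \<subseteq> I" by auto
      then show "T k * (if (\<Union>a\<in>A. k a) = I then 1 else 0) = T k * (\<Sum>J | J \<subseteq> I \<and> (\<Union>a\<in>A. k a) \<subseteq> J. (-1::int) ^ (card I - card J))"
        by (simp add: alt_sum_diff1 assms)
    qed simp
    also have "\<dots> = (\<Sum>k\<in>A \<rightarrow>\<^sub>E Pow I. (\<Sum>J | J \<in> Pow I \<and> (\<Union>a\<in>A. k a) \<subseteq> J. (-1::int) ^ (card I - card J) * T k))"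
      by (simp add: sum_distrib_left mult.commute)
    also have "\<dots> = (\<Sum>J\<in>Pow I. (\<Sum>k | k \<in> A \<rightarrow>\<^sub>E Pow I \<and> (\<Union>a\<in>A. k a) \<subseteq> J. (-1::int) ^ (card I - card J) * T k))"
      by (rule sum.swap_restrict) (use assms in \<open>auto intro: finite_PiE\<close>)
    also have "\<dots> = (\<Sum>J\<in>Pow I. (-1::int) ^ (card I - card J) * (\<Sum>k\<in>A \<rightarrow>\<^sub>E Pow J. T k))"
    proof (rule sum.cong)
      fix J assume J: "J \<in> Pow I"
      have "{k. k \<in> A \<rightarrow>\<^sub>E Pow I \<and> (\<Union>a\<in>A. k a) \<subseteq> J} = A \<rightarrow>\<^sub>E Pow J"
        using J by (auto simp: PiE_def Pi_def)
      then show "(\<Sum>k | k \<in> A \<rightarrow>\<^sub>E Pow I \<and> (\<Union>a\<in>A. k a) \<subseteq> J. (-1::int) ^ (card I - card J) * T k)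
          = (-1::int) ^ (card I - card J) * (\<Sum>k\<in>A \<rightarrow>\<^sub>E Pow J. T k)"
        by (simp add: sum_distrib_left)
    qed simp
    also have "\<dots> = (\<Sum>J\<in>Pow I. (-1) ^ (card I - card J) * ptensor A (\<lambda>a. gen J) f)"
    proof (rule sum.cong)
      fix J assume J: "J \<in> Pow I"
      then have fJ: "finite J" by (rule finI)
      have "ptensor A (\<lambda>a. gen J) f = (\<Prod>a\<in>A. \<Sum>S\<in>Pow J. cc S (f a))"
        using True fJ by (simp add: ptensor_def gen_eq)
      also have "\<dots> = (\<Sum>k\<in>A \<rightarrow>\<^sub>E Pow J. T k)"
        unfolding T_def by (rule prod_sum_PiE) (use assms fJ in auto)
      finally show "(-1::int) ^ (card I - card J) * (\<Sum>k\<in>A \<rightarrow>\<^sub>E Pow J. T k) = (-1) ^ (card I - card J) * ptensor A (\<lambda>a. gen J) f"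
        by simp
    qed simp
    finally show ?thesis by simp
  qed
qed

end
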